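(* Let $k$ be a field of characteristic $0$, $L/k$ a field extension, $S\in\mathbf{Fam}_L$ with data $a,b,t_0\in L$, and let $\{\mathcal{T}_\gamma\}$ be the one-parameter family of trisections described in the context. Let $R=(x_R,y_R,t_R)\in\mathcal{E}$ with $t_R\neq t_0$. Then there exists a unique $\gamma\in L(x_R,y_R,t_R)$ such that $R\in\mathcal{T}_\gamma$. In particular, if $R$ is $L$-rational, there is $\gamma\in L$ with $R\in\mathcal{T}_\gamma$.
   Context: $S$ is a del Pezzo surface of degree one in $\mathbb{P}(2,3,1,1)$, coordinates $(X:Y:Z:W)$, given by $Y^2=X^3+F(Z,W)X+G(Z,W)$, $F,G\in k[Z,W]$ homogeneous of degrees $4,6$; $f(t)=F(t,1)$, $g(t)=G(t,1)$; $\mathcal{E}:y^2=x^3+f(t)x+g(t)$ is the rational elliptic surface obtained by blowing up the base point of $|-K_S|$. $S\in\mathbf{Fam}_L$ means there exist $a,b,t_0\in L$ with $t_0\neq0$, $at_0+b\neq0$, $f(t_0)\neq-(at_0+b)^4/3$, such that $t_0$ is a double root of $P(t)=-f(t)^2/4+(at+b)^4f(t)/6+(at+b)^2g(t)+(at+b)^8/108$. Let $Q=((at_0+b)^2/3,\ (at_0+b)^3/6+f(t_0)/(2(at_0+b)),\ t_0)$. For a parameter $\gamma$, $\mathcal{T}_\gamma\subset\mathcal{E}$ is the curve $y=axt+bx+c(\gamma)t^3+d(\gamma)t^2+e(\gamma)t+\gamma$, where $c(\gamma),d(\gamma),e(\gamma)$ are the coefficients, uniquely determined by $\gamma$, for which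 $\mathcal{T}_\gamma$ has a triple point at $Q$. *)

theory Defs
  imports "HOL-Computational_Algebra.Polynomial"
begin

definition is_subfield :: "'a::field set \<Rightarrow> bool" where
  "is_subfield K \<longleftrightarrow> 0 \<in> K \<and> 1 \<in> K \<and>
     (\<forall>x\<in>K. \<forall>y\<in>K. x + y \<in> K \<and> x * y \<in> K) \<and>
     (\<forall>x\<in>K. - x \<in> K) \<and> (\<forall>x\<in>K. x \<noteq> 0 \<longrightarrow> inverse x \<in> K)"

definition field_adjoin :: "'a::field set \<Rightarrow> 'a set \<Rightarrow> 'a set" where
  "field_adjoin K S = \<Inter> {M. is_subfield M \<and> K \<union> S \<subseteq> M}"

definition on_E :: "'a::field poly \<Rightarrow> 'a poly \<Rightarrow> 'a \<Rightarrow> 'a \<Rightarrow> 'a \<Rightarrow> bool" where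
  "on_E f g x y t \<longleftrightarrow> y ^ 2 = x ^ 3 + poly f t * x + poly g t"

definition P_poly :: "'a::field_char_0 poly \<Rightarrow> 'a poly \<Rightarrow> 'a \<Rightarrow> 'a \<Rightarrow> 'a poly" where
  "P_poly f g a b =
     (let u = [:b, a:] in
      smult (- 1 / 4) (f ^ 2) + smult (1 / 6) (u ^ 4 * f) + u ^ 2 * g + smult (1 / 108) (u ^ 8))"

definition Q_x :: "'a::field_char_0 \<Rightarrow> 'a \<Rightarrow> 'a \<Rightarrow> 'a" where
  "Q_x a b t0 = (a * t0 + b) ^ 2 / 3"

definition Q_y :: "'a::field_char_0 poly \<Rightarrow> 'a \<Rightarrow> 'a \<Rightarrow> 'a \<Rightarrow> 'a" where
  "Q_y f a b t0 = (a * t0 + b) ^ 3 / 6 + poly f t0 / (2 * (a * t0 + b))"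

definition tri_cubic :: "'a::field \<Rightarrow> 'a \<Rightarrow> 'a \<Rightarrow> 'a \<Rightarrow> 'a poly" where
  "tri_cubic c d e \<gamma> = [:\<gamma>, e, d, c:]"

text \<open>The curve E \<inter> {y = (at+b)x + p(t)} is (via the graph map) the plane curve H(x,t) = 0 with
  H = ((at+b)x + p(t))^2 - x^3 - f(t) x - g(t); we represent H as a polynomial in x whose
  coefficients are polynomials in t.\<close>

definition tri_H :: "'a::field poly \<Rightarrow> 'a poly \<Rightarrow> 'a \<Rightarrow> 'a \<Rightarrow> 'a poly \<Rightarrow> 'a poly poly" where
  "tri_H f g a b p = (let u = [:b, a:] in [: p ^ 2 - g, smult 2 (u * p) - f, u ^ 2, - 1 :])"

text \<open>Multiplicity at least m at (x0,t0) of the plane curve given by H: after translating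
  (x0,t0) to the origin, every monomial x^i t^j of total degree i + j < m has coefficient 0.\<close>

definition mult_at_least ::
    "nat \<Rightarrow> 'a::field poly poly \<Rightarrow> 'a \<Rightarrow> 'a \<Rightarrow> bool" where
  "mult_at_least m H x0 t0 \<longleftrightarrow>
     (let Hs = map_poly (\<lambda>q. pcompose q [:t0, 1:]) (pcompose H [:[:x0:], 1:])
      in \<forall>i j. i + j < m \<longrightarrow> coeff (coeff Hs i) j = 0)"

definition triple_at_Q ::
    "'a::field_char_0 poly \<Rightarrow> 'a poly \<Rightarrow> 'a \<Rightarrow> 'a \<Rightarrow> 'a \<Rightarrow> 'a \<Rightarrow> 'a \<Rightarrow> 'a \<Rightarrow> 'a \<Rightarrow> bool" where
  "triple_at_Q f g a b t0 c d e \<gamma> \<longleftrightarrow>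
     Q_y f a b t0 = (a * t0 + b) * Q_x a b t0 + poly (tri_cubic c d e \<gamma>) t0 \<and>
     mult_at_least 3 (tri_H f g a b (tri_cubic c d e \<gamma>)) (Q_x a b t0) t0"

definition on_T ::
    "'a::field_char_0 poly \<Rightarrow> 'a poly \<Rightarrow> 'a \<Rightarrow> 'a \<Rightarrow> 'a \<Rightarrow> 'a \<Rightarrow> 'a \<Rightarrow> 'a \<Rightarrow> 'a \<Rightarrow> bool" where
  "on_T f g a b t0 \<gamma> x y t \<longleftrightarrow>
     on_E f g x y t \<and>
     (\<exists>c d e. triple_at_Q f g a b t0 c d e \<gamma> \<and>
        y = a * x * t + b * x + c * t ^ 3 + d * t ^ 2 + e * t + \<gamma>)"

end

theory Submission
  imports Defs
begin

lemma taylor0: "coeff (pcompose q [:t0,1:]) 0 = poly q (t0::'a::field_char_0)"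
  by (simp add: poly_0_coeff_0[symmetric] poly_pcompose)

lemma pderiv_shift: "pderiv (pcompose q [:t0,1:]) = pcompose (pderiv q) [:t0::'a::field_char_0,1:]"
  by (simp add: pderiv_pcompose pderiv_pCons)

lemma taylor1: "coeff (pcompose q [:t0,1:]) (Suc 0) = poly (pderiv q) (t0::'a::field_char_0)"
proof -
  have "coeff (pderiv (pcompose q [:t0,1:])) 0 = coeff (pcompose q [:t0,1:]) 1"
    by (simp add: coeff_pderiv)
  then show ?thesis using taylor0[of "pderiv q" t0] by (simp add: pderiv_shift)
qed

lemma taylor2: "coeff (pcompose q [:t0,1:]) 2 = poly (pderiv (pderiv q)) (t0::'a::field_char_0) / 2"
proof -
  have "coeff (pderiv (pcompose q [:t0,1:])) (Suc 0) = 2 * coeff (pcompose q [:t0,1:]) 2"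
    by (simp add: coeff_pderiv numeral_2_eq_2)
  then show ?thesis using taylor1[of "pderiv q" t0] by (simp add: pderiv_shift)
qed

lemma xshift:
  fixes A0 A1 A2 A3 C :: "'a::comm_ring_1"
  shows "coeff (pcompose [:A0,A1,A2,A3:] [:C,1:]) 0 = A0 + C*A1 + C^2*A2 + C^3*A3"
    "coeff (pcompose [:A0,A1,A2,A3:] [:C,1:]) (Suc 0) = A1 + 2*C*A2 + 3*C^2*A3"
    "coeff (pcompose [:A0,A1,A2,A3:] [:C,1:]) 2 = A2 + 3*C*A3"
  by (simp_all add: pcompose_pCons algebra_simps numeral_2_eq_2 power2_eq_square power3_eq_cube mult_pCons_left)

lemma enum3: "(\<forall>i j. i + j < (3::nat) \<longrightarrow> Q i j) \<longleftrightarrow>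
  (Q 0 0 \<and> Q 0 (Suc 0) \<and> Q 0 2 \<and> Q (Suc 0) 0 \<and> Q (Suc 0) (Suc 0) \<and> Q 2 0)"
proof
  assume "Q 0 0 \<and> Q 0 (Suc 0) \<and> Q 0 2 \<and> Q (Suc 0) 0 \<and> Q (Suc 0) (Suc 0) \<and> Q 2 0"
  moreover have "i + j < (3::nat) \<Longrightarrow> (i=0\<and>j=0) \<or> (i=0\<and>j=1) \<or> (i=0\<and>j=2) \<or> (i=1\<and>j=0) \<or> (i=1\<and>j=1) \<or> (i=2\<and>j=0)" for i j
    by arith
  ultimately show "\<forall>i j. i + j < (3::nat) \<longrightarrow> Q i j"
    by (metis One_nat_def)
qed auto

lemma mult3_iff:
  fixes f g p :: "'a::field_char_0 poly"
  shows "mult_at_least 3 (tri_H f g a b p) x0 t0 \<longleftrightarrow>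
   (((a*t0+b)*x0 + poly p t0)^2 - poly g t0 - poly f t0 * x0 - x0^3 = 0 \<and>
   2*((a*t0+b)*x0 + poly p t0)*(a*x0 + poly (pderiv p) t0) - poly (pderiv g) t0 - poly (pderiv f) t0 * x0 = 0 \<and>
   2*(a*x0 + poly (pderiv p) t0)^2 + 2*((a*t0+b)*x0 + poly p t0)*poly (pderiv (pderiv p)) t0
      - poly (pderiv (pderiv g)) t0 - poly (pderiv (pderiv f)) t0 * x0 = 0 \<and>
   2*(a*t0+b)*((a*t0+b)*x0 + poly p t0) - poly f t0 - 3*x0^2 = 0 \<and>
   2*a*((a*t0+b)*x0 + poly p t0) + 2*(a*t0+b)*(a*x0 + poly (pderiv p) t0) - poly (pderiv f) t0 = 0 \<and>
   (a*t0+b)^2 - 3*x0 = 0)" (is "_ \<longleftrightarrow> ?R")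
proof -
  define Hs where "Hs = map_poly (\<lambda>q. pcompose q [:t0, 1:]) (pcompose (tri_H f g a b p) [:[:x0:], 1:])"
  have cm: "coeff Hs i = pcompose (coeff (pcompose (tri_H f g a b p) [:[:x0:], 1:]) i) [:t0,1:]" for i
    unfolding Hs_def by (simp add: coeff_map_poly)
  have "mult_at_least 3 (tri_H f g a b p) x0 t0 \<longleftrightarrow> (\<forall>i j. i + j < 3 \<longrightarrow> coeff (coeff Hs i) j = 0)"
    unfolding mult_at_least_def Hs_def Let_def by simp
  also have "\<dots> \<longleftrightarrow> ?R"
    unfolding enum3 cm tri_H_def Let_def xshift taylor0 taylor1 taylor2
    by (simp add: pderiv_add pderiv_mult pderiv_diff pderiv_pCons pderiv_smult power2_eq_square power3_eq_cube algebra_simps)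
  finally show ?thesis .
qed

lemma P_val:
  fixes f g :: "'a::field_char_0 poly"
  shows "poly (P_poly f g a b) t0 = - (poly f t0 ^ 2) / 4 + (a*t0+b)^4 * poly f t0/6 + (a*t0+b)^2 * poly g t0 + (a*t0+b)^8/108"
  unfolding P_poly_def Let_def by (simp add: algebra_simps)

lemma P_der:
  fixes f g :: "'a::field_char_0 poly"
  shows "poly (pderiv (P_poly f g a b)) t0 = - poly f t0 * poly (pderiv f) t0 / 2
     + (4*(a*t0+b)^3*a*poly f t0 + (a*t0+b)^4 * poly (pderiv f) t0)/6
     + 2*(a*t0+b)*a*poly g t0 + (a*t0+b)^2 * poly (pderiv g) t0 + 8*(a*t0+b)^7*a/108"
  unfolding P_poly_def Let_def
  by (simp add: pderiv_add pderiv_diff pderiv_minus pderiv_mult pderiv_smult pderiv_power pderiv_pCons algebra_simps)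

lemma double_root:
  assumes "P \<noteq> 0" "order t0 P \<ge> 2"
  shows "poly P t0 = 0" "poly (pderiv P) (t0::'a::field_char_0) = 0"
proof -
  have "[:-t0,1:]^2 dvd P" using assms order_divides by blast
  then obtain Q where Q: "P = [:-t0,1:]^2 * Q" by (elim dvdE)
  show "poly P t0 = 0" using Q by simp
  show "poly (pderiv P) t0 = 0" using Q
    by (simp add: pderiv_mult pderiv_power pderiv_pCons)
qed

lemma sf_props:
  assumes "is_subfield M"
  shows "0 \<in> M" "1 \<in> M" "x \<in> M \<Longrightarrow> y \<in> M \<Longrightarrow> x + y \<in> M"
    "x \<in> M \<Longrightarrow> y \<in> M \<Longrightarrow> x * y \<in> M" "x \<in> M \<Longrightarrow> - x \<in> M"
    "x \<in> M \<Longrightarrow> inverse x \<in> M"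
  using assms unfolding is_subfield_def by (auto simp del: inverse_zero) (metis inverse_zero)

lemma sf_diff: "is_subfield M \<Longrightarrow> x \<in> M \<Longrightarrow> y \<in> M \<Longrightarrow> x - y \<in> M"
  by (metis diff_conv_add_uminus sf_props(3,5))

lemma sf_divide: "is_subfield M \<Longrightarrow> x \<in> M \<Longrightarrow> y \<in> M \<Longrightarrow> x / y \<in> M"
  by (metis divide_inverse sf_props(4,6))

lemma sf_power: "is_subfield M \<Longrightarrow> x \<in> M \<Longrightarrow> x ^ n \<in> M"
  by (induction n) (auto intro: sf_props)

lemma sf_of_nat: "is_subfield M \<Longrightarrow> of_nat n \<in> M"
  by (induction n) (auto intro: sf_props)

lemma sf_numeral: "is_subfield M \<Longrightarrow> numeral n \<in> M"
  by (metis of_nat_numeral sf_of_nat)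

lemma sf_poly: "is_subfield M \<Longrightarrow> (\<forall>i. coeff q i \<in> M) \<Longrightarrow> t \<in> M \<Longrightarrow> poly q t \<in> M"
proof (induction q)
  case (pCons a p)
  have "\<forall>i. coeff p i \<in> M" using pCons.prems(2) by (metis coeff_pCons_Suc)
  moreover have "a \<in> M" using pCons.prems(2) by (metis coeff_pCons_0)
  ultimately show ?case using pCons by (auto intro: sf_props)
qed (auto intro: sf_props)

lemma sf_pderiv: "is_subfield M \<Longrightarrow> (\<forall>i. coeff q i \<in> M) \<Longrightarrow> (\<forall>i. coeff (pderiv q) i \<in> M)"
  by (auto simp: coeff_pderiv intro: sf_props sf_of_nat)

lemma sf_Inter: "(\<And>M. M \<in> S \<Longrightarrow> is_subfield M) \<Longrightarrow> is_subfield (\<Inter> S)"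
  unfolding is_subfield_def by auto

lemma adjoin_sf: "is_subfield (field_adjoin K S)"
  unfolding field_adjoin_def by (rule sf_Inter) auto

lemma adjoin_sup: "K \<union> S \<subseteq> field_adjoin K S"
  unfolding field_adjoin_def by auto

lemma adjoin_le: "is_subfield M \<Longrightarrow> K \<union> S \<subseteq> M \<Longrightarrow> field_adjoin K S \<subseteq> M"
  unfolding field_adjoin_def by auto

lemma cubic_vals:
  "poly (tri_cubic c d e \<gamma>) t = \<gamma> + e*t + d*t^2 + c*t^3"
  "poly (pderiv (tri_cubic c d e \<gamma>)) t = e + 2*d*t + 3*c*t^2"
  "poly (pderiv (pderiv (tri_cubic c d e \<gamma>))) t = 2*d + 6*c*(t::'a::field_char_0)"
  unfolding tri_cubic_def by (simp_all add: pderiv_pCons algebra_simps power2_eq_square power3_eq_cube)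

lemma cubic_unique:
  fixes t0 tR :: "'a::field_char_0"
  assumes "\<gamma> + e*t0 + d*t0^2 + c*t0^3 = \<gamma>' + e'*t0 + d'*t0^2 + c'*t0^3"
    "e + 2*d*t0 + 3*c*t0^2 = e' + 2*d'*t0 + 3*c'*t0^2"
    "2*d + 6*c*t0 = 2*d' + 6*c'*t0"
    "\<gamma> + e*tR + d*tR^2 + c*tR^3 = \<gamma>' + e'*tR + d'*tR^2 + c'*tR^3"
    "tR \<noteq> t0"
  shows "\<gamma> = \<gamma>'"
proof -
  define C where "C = c - c'"
  define D where "D = d - d'"
  define E where "E = e - e'"
  define G where "G = \<gamma> - \<gamma>'"
  have "2*(D + 3*C*t0) = 0" using assms(3) unfolding C_def D_def by (simp add: algebra_simps)
  then have "D + 3*C*t0 = 0" by (metis mult_eq_0_iff zero_neq_numeral)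
  then have hd: "D = -3*C*t0" by algebra
  have "E + 2*D*t0 + 3*C*t0^2 = 0" using assms(2) unfolding C_def D_def E_def by (simp add: algebra_simps)
  then have he: "E = 3*C*t0^2" using hd by algebra
  have "G + E*t0 + D*t0^2 + C*t0^3 = 0" using assms(1) unfolding C_def D_def E_def G_def by (simp add: algebra_simps)
  then have hg: "G = -C*t0^3" using hd he by algebra
  have h4: "G + E*tR + D*tR^2 + C*tR^3 = 0" using assms(4) unfolding C_def D_def E_def G_def by (simp add: algebra_simps)
  have "C*(tR-t0)^3 = G + E*tR + D*tR^2 + C*tR^3" unfolding hd he hg
    by (simp add: algebra_simps power2_eq_square power3_eq_cube)
  then have "C*(tR-t0)^3 = 0" using h4 by simp
  then have "C = 0" using assms(5) by simp
  then show ?thesis using hg unfolding G_def by simp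
qed

theorem proposition3p7:
  fixes k L :: "'a::field_char_0 set"
    and f g :: "'a poly"
    and a b t0 xR yR tR :: 'a
  assumes "is_subfield k" and "is_subfield L" and "k \<subseteq> L"
    and "\<forall>i. coeff f i \<in> k" and "\<forall>i. coeff g i \<in> k"
    and "degree f \<le> 4" and "degree g \<le> 6"
    and "a \<in> L" and "b \<in> L" and "t0 \<in> L"
    and "t0 \<noteq> 0" and "a * t0 + b \<noteq> 0"
    and "poly f t0 \<noteq> - ((a * t0 + b) ^ 4 / 3)"
    and "P_poly f g a b \<noteq> 0" and "order t0 (P_poly f g a b) \<ge> 2"
    and "on_E f g xR yR tR" and "tR \<noteq> t0"
  shows "(\<exists>\<gamma>\<in>field_adjoin L {xR, yR, tR}. on_T f g a b t0 \<gamma> xR yR tR \<and>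
            (\<forall>\<gamma>'\<in>field_adjoin L {xR, yR, tR}. on_T f g a b t0 \<gamma>' xR yR tR \<longrightarrow> \<gamma>' = \<gamma>))
       \<and> (xR \<in> L \<and> yR \<in> L \<and> tR \<in> L \<longrightarrow> (\<exists>\<gamma>\<in>L. on_T f g a b t0 \<gamma> xR yR tR))"
proof -
  define u0 where "u0 = a*t0+b"
  define x0 where "x0 = Q_x a b t0"
  define y0 where "y0 = Q_y f a b t0"
  define F0 where "F0 = poly f t0"
  define F1 where "F1 = poly (pderiv f) t0"
  define F2 where "F2 = poly (pderiv (pderiv f)) t0"
  define G0 where "G0 = poly g t0"
  define G1 where "G1 = poly (pderiv g) t0"
  define G2 where "G2 = poly (pderiv (pderiv g)) t0"
  have u0nz: "u0 \<noteq> 0" using assms(12) unfolding u0_def .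
  have x0v: "x0 = u0^2/3" unfolding x0_def u0_def Q_x_def ..
  have y0v: "y0 = u0^3/6 + F0/(2*u0)" unfolding y0_def u0_def Q_y_def F0_def ..
  have F0ne: "u0^4 + 3*F0 \<noteq> 0"
  proof
    assume h: "u0^4 + 3*F0 = 0"
    have "F0 = - (u0^4/3)" using h by (simp add: field_simps add_eq_0_iff2)
    then show False using assms(13) unfolding u0_def F0_def by simp
  qed
  have y0v': "y0 = (u0^4 + 3*F0)/(6*u0)" unfolding y0v using u0nz
    by (simp add: field_simps power_numeral_reduce)
  have y0nz: "y0 \<noteq> 0" unfolding y0v' using u0nz F0ne by simp
  have PP: "- (F0 ^ 2) / 4 + u0^4 * F0/6 + u0^2 * G0 + u0^8/108 = 0"
    using double_root(1)[OF assms(14,15)] P_val[of f g a b t0] unfolding u0_def F0_def G0_def by simp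
  have PD: "- F0 * F1 / 2 + (4*u0^3*a*F0 + u0^4 * F1)/6 + 2*u0*a*G0 + u0^2 * G1 + 8*u0^7*a/108 = 0"
    using double_root(2)[OF assms(14,15)] P_der[of f g a b t0] unfolding u0_def F0_def G0_def F1_def G1_def by simp
  have E00: "y0^2 - G0 - F0*x0 - x0^3 = 0"
  proof -
    have "u0^2 * (y0^2 - G0 - F0*x0 - x0^3) = - (- (F0 ^ 2) / 4 + u0^4 * F0/6 + u0^2 * G0 + u0^8/108)"
      unfolding x0v y0v using u0nz by (simp add: field_simps power_numeral_reduce)
    then have "u0^2 * (y0^2 - G0 - F0*x0 - x0^3) = 0" unfolding PP by simp
    then show ?thesis using u0nz by simp
  qed
  have hF0: "F0 = 2*u0*y0 - u0^4/3" unfolding y0v using u0nz by (simp add: field_simps power_numeral_reduce)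
  define W1 where "W1 = (G1 + F1*x0)/(2*y0)"
  have E11: "2*a*y0 + 2*u0*W1 - F1 = 0"
  proof -
    have "(2*a*y0 + 2*u0*W1 - F1) * (y0*u0) = (- F0 * F1 / 2 + (4*u0^3*a*F0 + u0^4 * F1)/6 + 2*u0*a*G0 + u0^2 * G1 + 8*u0^7*a/108)
       - 2*a/u0 * (- (F0 ^ 2) / 4 + u0^4 * F0/6 + u0^2 * G0 + u0^8/108)"
      unfolding W1_def x0v hF0 using u0nz y0nz by (simp add: field_simps power_numeral_reduce)
    then have "(2*a*y0 + 2*u0*W1 - F1) * (y0*u0) = 0" unfolding PP PD by simp
    then show ?thesis using u0nz y0nz by simp
  qed
  define P0 where "P0 = y0 - u0*x0"
  define P1 where "P1 = W1 - a*x0"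
  define P2 where "P2 = (G2 + F2*x0 - 2*W1^2)/(2*y0)"
  define s where "s = tR - t0"
  define V where "V = yR - a*xR*tR - b*xR"
  define c where "c = (V - P0 - P1*s - P2/2*s^2)/s^3"
  define d where "d = P2/2 - 3*c*t0"
  define e where "e = P1 - P2*t0 + 3*c*t0^2"
  define \<gamma> where "\<gamma> = P0 - P1*t0 + P2/2*t0^2 - c*t0^3"
  have snz: "s \<noteq> 0" using assms(17) unfolding s_def by simp
  have cv0: "\<gamma> + e*t0 + d*t0^2 + c*t0^3 = P0" unfolding d_def e_def \<gamma>_def
    by (simp add: field_simps power2_eq_square power3_eq_cube)
  have cv1: "e + 2*d*t0 + 3*c*t0^2 = P1" unfolding d_def e_def
    by (simp add: field_simps power2_eq_square power3_eq_cube)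
  have cv2: "2*d + 6*c*t0 = P2" unfolding d_def
    by (simp add: field_simps power2_eq_square power3_eq_cube)
  have cvR: "\<gamma> + e*tR + d*tR^2 + c*tR^3 = V"
  proof -
    have "\<gamma> + e*tR + d*tR^2 + c*tR^3 = P0 + P1*s + P2/2*s^2 + c*s^3" unfolding s_def d_def e_def \<gamma>_def
      by (simp add: field_simps power2_eq_square power3_eq_cube)
    also have "c*s^3 = V - P0 - P1*s - P2/2*s^2" unfolding c_def using snz by simp
    finally show ?thesis by simp
  qed
  have hW0: "u0*x0 + P0 = y0" unfolding P0_def by simp
  have hW1: "a*x0 + P1 = W1" unfolding P1_def by simp
  have tripiff: "triple_at_Q f g a b t0 c' d' e' \<gamma>' \<longleftrightarrow>
     y0 = u0 * x0 + (\<gamma>' + e'*t0 + d'*t0^2 + c'*t0^3) \<and>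
     ((u0*x0 + (\<gamma>' + e'*t0 + d'*t0^2 + c'*t0^3))^2 - G0 - F0 * x0 - x0^3 = 0 \<and>
   2*(u0*x0 + (\<gamma>' + e'*t0 + d'*t0^2 + c'*t0^3))*(a*x0 + (e' + 2*d'*t0 + 3*c'*t0^2)) - G1 - F1 * x0 = 0 \<and>
   2*(a*x0 + (e' + 2*d'*t0 + 3*c'*t0^2))^2 + 2*(u0*x0 + (\<gamma>' + e'*t0 + d'*t0^2 + c'*t0^3))*(2*d' + 6*c'*t0)
      - G2 - F2 * x0 = 0 \<and>
   2*u0*(u0*x0 + (\<gamma>' + e'*t0 + d'*t0^2 + c'*t0^3)) - F0 - 3*x0^2 = 0 \<and>
   2*a*(u0*x0 + (\<gamma>' + e'*t0 + d'*t0^2 + c'*t0^3)) + 2*u0*(a*x0 + (e' + 2*d'*t0 + 3*c'*t0^2)) - F1 = 0 \<and>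
   u0^2 - 3*x0 = 0)" for c' d' e' \<gamma>'
    unfolding triple_at_Q_def mult3_iff cubic_vals u0_def x0_def y0_def F0_def F1_def F2_def G0_def G1_def G2_def ..
  have e2: "2*y0*W1 - G1 - F1*x0 = 0" unfolding W1_def using y0nz by simp
  have e3: "2*W1^2 + 2*y0*P2 - G2 - F2*x0 = 0" unfolding P2_def using y0nz by simp
  have e4: "2*u0*y0 - F0 - 3*x0^2 = 0" unfolding hF0 x0v using u0nz
      by (simp add: field_simps power_numeral_reduce)
  have e6: "u0^2 - 3*x0 = 0" unfolding x0v by simp
  have trip: "triple_at_Q f g a b t0 c d e \<gamma>"
    unfolding tripiff cv0 cv1 cv2 hW0 hW1 using E00 e2 e3 e4 E11 e6 by simp
  have onT: "on_T f g a b t0 \<gamma> xR yR tR"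
    unfolding on_T_def
  proof (intro conjI exI)
    show "on_E f g xR yR tR" by (rule assms(16))
    show "triple_at_Q f g a b t0 c d e \<gamma>" by (rule trip)
    show "yR = a * xR * tR + b * xR + c * tR ^ 3 + d * tR ^ 2 + e * tR + \<gamma>"
      using cvR unfolding V_def by (simp add: algebra_simps)
  qed
  have uniq: "\<gamma>' = \<gamma>" if h: "on_T f g a b t0 \<gamma>' xR yR tR" for \<gamma>'
  proof -
    obtain c' d' e' where t': "triple_at_Q f g a b t0 c' d' e' \<gamma>'"
      and y': "yR = a * xR * tR + b * xR + c' * tR ^ 3 + d' * tR ^ 2 + e' * tR + \<gamma>'"
      using h unfolding on_T_def by blast
    define Q0 where "Q0 = \<gamma>' + e'*t0 + d'*t0^2 + c'*t0^3"
    define Q1 where "Q1 = e' + 2*d'*t0 + 3*c'*t0^2"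
    define Q2 where "Q2 = 2*d' + 6*c'*t0"
    have t'': "y0 = u0 * x0 + Q0" "2*(u0*x0 + Q0)*(a*x0 + Q1) - G1 - F1 * x0 = 0"
       "2*(a*x0 + Q1)^2 + 2*(u0*x0 + Q0)*Q2 - G2 - F2 * x0 = 0"
      using t' unfolding tripiff Q0_def[symmetric] Q1_def[symmetric] Q2_def[symmetric] by auto
    have q0: "Q0 = P0" using t''(1) unfolding P0_def by simp
    have "2*y0*(a*x0 + Q1) = G1 + F1*x0" using t''(1,2) by algebra
    then have "a*x0 + Q1 = W1" unfolding W1_def using y0nz by (simp add: field_simps)
    then have q1: "Q1 = P1" unfolding P1_def by (simp add: eq_diff_eq add.commute)
    have "2*W1^2 + 2*y0*Q2 - G2 - F2 * x0 = 0" using t''(1,3) \<open>a*x0 + Q1 = W1\<close> by algebra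
    then have q2: "Q2 = P2" unfolding P2_def using y0nz by (simp add: field_simps)
    have "\<gamma>' + e'*tR + d'*tR^2 + c'*tR^3 = V" using y' unfolding V_def by (simp add: algebra_simps)
    have h1: "\<gamma>' + e'*t0 + d'*t0^2 + c'*t0^3 = \<gamma> + e*t0 + d*t0^2 + c*t0^3"
      using q0 cv0 unfolding Q0_def by simp
    have h2: "e' + 2*d'*t0 + 3*c'*t0^2 = e + 2*d*t0 + 3*c*t0^2"
      using q1 cv1 unfolding Q1_def by simp
    have h3: "2*d' + 6*c'*t0 = 2*d + 6*c*t0"
      using q2 cv2 unfolding Q2_def by simp
    have h4: "\<gamma>' + e'*tR + d'*tR^2 + c'*tR^3 = \<gamma> + e*tR + d*tR^2 + c*tR^3"
      using cvR \<open>\<gamma>' + e'*tR + d'*tR^2 + c'*tR^3 = V\<close> by simp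
    show ?thesis by (rule cubic_unique[OF h1 h2 h3 h4 assms(17)])
  qed
  define M where "M = field_adjoin L {xR, yR, tR}"
  have sfM: "is_subfield M" unfolding M_def by (rule adjoin_sf)
  have LM: "L \<subseteq> M" and RM: "xR \<in> M" "yR \<in> M" "tR \<in> M" using adjoin_sup[of L "{xR, yR, tR}"] unfolding M_def by auto
  have cf: "\<forall>i. coeff f i \<in> M" "\<forall>i. coeff g i \<in> M" using assms(3,4,5) LM by auto
  have t0M: "t0 \<in> M" "a \<in> M" "b \<in> M" using assms(8,9,10) LM by auto
  have FGM: "F0 \<in> M" "F1 \<in> M" "F2 \<in> M" "G0 \<in> M" "G1 \<in> M" "G2 \<in> M"
    unfolding F0_def F1_def F2_def G0_def G1_def G2_def
    using sf_poly[OF sfM _ t0M(1)] sf_pderiv[OF sfM] cf by blast+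
  note cl = sf_props[OF sfM] sf_diff[OF sfM] sf_divide[OF sfM] sf_power[OF sfM] sf_numeral[OF sfM]
  have u0M: "u0 \<in> M" unfolding u0_def using t0M by (intro cl)
  have x0M: "x0 \<in> M" unfolding x0v using u0M by (intro cl)
  have y0M: "y0 \<in> M" unfolding y0v using u0M FGM by (intro cl)
  have W1M: "W1 \<in> M" unfolding W1_def using y0M x0M FGM by (intro cl)
  have PM: "P0 \<in> M" "P1 \<in> M" "P2 \<in> M" unfolding P0_def P1_def P2_def using y0M x0M FGM W1M u0M t0M
    by (auto intro!: cl)
  have VM: "V \<in> M" "s \<in> M" unfolding V_def s_def using RM t0M by (auto intro!: cl)
  have cM: "c \<in> M" unfolding c_def using VM PM by (intro cl)
  have gM: "\<gamma> \<in> M" unfolding \<gamma>_def using cM PM t0M by (intro cl)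
  have part2: "\<exists>\<gamma>\<in>L. on_T f g a b t0 \<gamma> xR yR tR" if "xR \<in> L \<and> yR \<in> L \<and> tR \<in> L"
  proof -
    have "M \<subseteq> L" unfolding M_def by (rule adjoin_le) (use assms(2) that in auto)
    then show ?thesis using gM onT by blast
  qed
  show ?thesis using gM onT uniq part2 unfolding M_def by blast
qed

end
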